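(* Let $P$ be a 2-dimensional plane or a sphere in $\mathbb R^3$ with its usual induced surface measure $dS$, let $\xi\in\mathbb R^3$, and let $\epsilon=\frac1{10}$. Then there exists $C$ independent of $\xi$ and $P$ such that $$\int_P\frac{1}{|\xi-\eta|^{2-\epsilon}\,|\tfrac{\xi}{2}-\eta|\,|\eta|^{2-\epsilon}}\,dS(\eta)\le\frac{C}{|\xi|^{3-2\epsilon}}.$$ *)

theory Defs
  imports "HOL-Analysis.Analysis"
begin

text \<open>Plane through a spanned by the orthonormal vectors u, v:
  eta = a + s u + t v, with dS = ds dt.\<close>
definition plane_integral :: "(real^3 \<Rightarrow> real) \<Rightarrow> real^3 \<Rightarrow> real^3 \<Rightarrow> real^3 \<Rightarrow> ennreal" where
  "plane_integral f a u v =
     (\<integral>\<^sup>+ p. ennreal (f (a + fst p *\<^sub>R u + snd p *\<^sub>R v)) \<partial>(lborel :: (real \<times> real) measure))"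

definition orthonormal_pair :: "real^3 \<Rightarrow> real^3 \<Rightarrow> bool" where
  "orthonormal_pair u v \<longleftrightarrow> norm u = 1 \<and> norm v = 1 \<and> u \<bullet> v = 0"

definition sph :: "real \<Rightarrow> real \<Rightarrow> real^3" where
  "sph \<theta> \<phi> = vector [sin \<theta> * cos \<phi>, sin \<theta> * sin \<phi>, cos \<theta>]"

definition sphere_integral :: "(real^3 \<Rightarrow> real) \<Rightarrow> real^3 \<Rightarrow> real \<Rightarrow> ennreal" where
  "sphere_integral f c r =
     (\<integral>\<^sup>+ p \<in> {0..pi} \<times> {0..2*pi}.
        ennreal (f (c + r *\<^sub>R sph (fst p) (snd p)) * r\<^sup>2 * sin (fst p)) \<partial>(lborel :: (real \<times> real) measure))"

definition eps0 :: real where "eps0 = 1/10"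

definition kernel :: "real^3 \<Rightarrow> real^3 \<Rightarrow> real" where
  "kernel \<xi> \<eta> = 1 / (norm (\<xi> - \<eta>) powr (2 - eps0) * norm ((1/2) *\<^sub>R \<xi> - \<eta>) * norm \<eta> powr (2 - eps0))"

end

theory Submission
  imports Defs
begin


lemma A: fixes R a :: real assumes R: "0 < R"
  shows "(R / 2^(k+1)) powr (-a) = R powr (-a) * (2 powr a)^(k+1)"
proof -
  have e1: "(2::real)^(k+1) = 2 powr (real (k+1))" by (subst powr_realpow) auto
  have "(R / 2^(k+1)) powr (-a) = R powr (-a) / (2 powr (real (k+1))) powr (-a)"
    using R by (simp only: e1 powr_divide)
  also have "(2 powr (real (k+1))) powr (-a) = 2 powr (real (k+1) * (-a))" by (rule powr_powr)
  also have "\<dots> = 2 powr (- (real (k+1) * a))" by simp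
  also have "\<dots> = inverse (2 powr (real (k+1) * a))" by (rule powr_minus)
  also have "2 powr (real (k+1) * a) = (2 powr a)^(k+1)" by (rule powr_power[symmetric]) simp
  finally show ?thesis by (simp only: divide_inverse inverse_inverse_eq)
qed
lemma B: fixes R :: real assumes R: "0 < R"
  shows "(R / 2^k)^2 = R powr 2 / 4^k"
proof -
  have "(R / 2^k)^2 = R^2 / (2^k)^2" by (simp add: power_divide)
  also have "((2::real)^k)^2 = (2^2)^k" by (simp only: power_mult[symmetric] mult.commute)
  also have "((2::real)^2)^k = 4^k" by simp
  finally show ?thesis using R by (simp add: powr_realpow)
qed
lemma ring_aux: "(P::real) * Q^(k+1) * (S/F) = (P*S)*Q*(Q^k/F)"
  by (simp add: divide_inverse mult_ac)

lemma geom_ident_near: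
  fixes R a :: real and k :: nat
  assumes R: "0 < R"
  shows "(R / 2^(k+1)) powr (-a) * (R / 2^k)^2 = R powr (2 - a) * 2 powr a * (2 powr a / 4)^k"
proof -
  have "(R / 2^(k+1)) powr (-a) * (R / 2^k)^2 = R powr (-a) * (2 powr a)^(k+1) * (R powr 2 / 4^k)"
    by (simp only: A[OF R] B[OF R])
  also have "\<dots> = (R powr (-a) * R powr 2) * 2 powr a * ((2 powr a)^k / 4^k)"
    by (rule ring_aux)
  also have "R powr (-a) * R powr 2 = R powr (2 - a)"
    by (simp add: powr_add[symmetric])
  also have "(2 powr a)^k / 4^k = (2 powr a / 4)^k"
    by (simp add: power_divide)
  finally show ?thesis .
qed

lemma dyadic_near:
  fixes D :: "'a \<Rightarrow> real" and W :: "'a \<Rightarrow> ennreal"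
  assumes [measurable]: "D \<in> borel_measurable M" "W \<in> borel_measurable M"
    and Dnn: "\<And>x. 0 \<le> D x"
    and H: "\<And>\<rho>. \<rho> > 0 \<Longrightarrow> (\<integral>\<^sup>+x. W x * indicator {x\<in>space M. D x < \<rho>} x \<partial>M) \<le> ennreal (K * \<rho>^2)"
    and a: "0 \<le> a" "a < 2" and R: "0 < R" and K: "0 \<le> K"
  shows "(\<integral>\<^sup>+x. W x * ennreal (if D x < R then D x powr (-a) else 0) \<partial>M)
           \<le> ennreal (K * (2 powr a / (1 - 2 powr a / 4)) * R powr (2 - a))"
proof -
  define c where "c k = (R / 2^(k+1)) powr (-a)" for k :: nat
  define r where "r k = R / 2^k" for k :: nat
  have c0: "0 \<le> c k" for k unfolding c_def by simp
  have pw: "ennreal (if D x < R then D x powr (-a) else 0)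
     \<le> (\<Sum>k. ennreal (c k) * indicator {x\<in>space M. D x < r k} x)" if x: "x \<in> space M" for x
  proof (cases "0 < D x \<and> D x < R")
    case False
    then show ?thesis using Dnn[of x] by auto
  next
    case True
    obtain n where n: "R / D x < 2^n" using real_arch_pow[of 2 "R / D x"] by auto
    have ex: "R / 2^n \<le> D x" using n True by (simp add: field_simps)
    define n0 where "n0 = (LEAST n. R / 2^n \<le> D x)"
    have P: "R / 2^n0 \<le> D x" unfolding n0_def by (rule LeastI[of _ n]) (rule ex)
    have "n0 \<noteq> 0"
    proof
      assume "n0 = 0"
      with P have "R \<le> D x" by simp
      with True show False by simp
    qed
    then obtain k where k: "n0 = Suc k" by (cases n0) auto
    have "\<not> R / 2^k \<le> D x" using not_less_Least[of k "\<lambda>n. R / 2^n \<le> D x"] k n0_def by auto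
    hence lt: "D x < r k" unfolding r_def by simp
    have "D x powr (-a) \<le> c k" unfolding c_def
      using P k R a by (intro powr_mono2') auto
    hence "ennreal (if D x < R then D x powr (-a) else 0) \<le> ennreal (c k) * indicator {x\<in>space M. D x < r k} x"
      using True lt x by (auto intro: ennreal_leI)
    also have "\<dots> \<le> (\<Sum>k. ennreal (c k) * indicator {x\<in>space M. D x < r k} x)"
      using ennreal_suminf_lessD[of "\<lambda>k. ennreal (c k) * indicator {x\<in>space M. D x < r k} x"] not_le by blast
    finally show ?thesis .
  qed
  have "(\<integral>\<^sup>+x. W x * ennreal (if D x < R then D x powr (-a) else 0) \<partial>M)
     \<le> (\<integral>\<^sup>+x. (\<Sum>k. W x * (ennreal (c k) * indicator {x\<in>space M. D x < r k} x)) \<partial>M)"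
    by (intro nn_integral_mono) (simp add: mult_left_mono pw)
  also have "\<dots> = (\<Sum>k. \<integral>\<^sup>+x. W x * (ennreal (c k) * indicator {x\<in>space M. D x < r k} x) \<partial>M)"
    by (rule nn_integral_suminf) measurable
  also have "\<dots> = (\<Sum>k. ennreal (c k) * \<integral>\<^sup>+x. W x * indicator {x\<in>space M. D x < r k} x \<partial>M)"
    by (subst nn_integral_cmult[symmetric]) (measurable, simp add: ac_simps)
  also have "\<dots> \<le> (\<Sum>k. ennreal (c k) * ennreal (K * (r k)^2))"
    using R by (intro suminf_le mult_left_mono H summableI) (auto simp: r_def)
  also have "\<dots> = (\<Sum>k. ennreal (K * R powr (2 - a) * 2 powr a * (2 powr a / 4)^k))"
  proof (rule arg_cong[where f=suminf], rule ext)
    fix k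
    have "c k * (K * (r k)^2) = K * (c k * (r k)^2)" by simp
    also have "\<dots> = K * R powr (2 - a) * 2 powr a * (2 powr a / 4)^k"
      unfolding c_def r_def geom_ident_near[OF R] by simp
    finally have e: "c k * (K * (r k)^2) = K * R powr (2 - a) * 2 powr a * (2 powr a / 4)^k" .
    show "ennreal (c k) * ennreal (K * (r k)^2) = ennreal (K * R powr (2 - a) * 2 powr a * (2 powr a / 4)^k)"
      unfolding e[symmetric] using c0[of k] K by (subst ennreal_mult) auto
  qed
  also have "\<dots> = ennreal (\<Sum>k. K * R powr (2 - a) * 2 powr a * (2 powr a / 4)^k)"
  proof -
    have q: "2 powr a / 4 < 1" using powr_less_mono[of a 2 2] a by simp
    show ?thesis using q K
      by (intro suminf_ennreal2) (auto intro!: summable_mult summable_geometric)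
  qed
  also have "(\<Sum>k. K * R powr (2 - a) * 2 powr a * (2 powr a / 4)^k) = K * R powr (2 - a) * 2 powr a * (1 / (1 - 2 powr a / 4))"
  proof -
    have q: "2 powr a / 4 < 1" using powr_less_mono[of a 2 2] a by simp
    show ?thesis using q by (subst suminf_mult) (auto intro!: summable_geometric simp: suminf_geometric)
  qed
  also have "K * R powr (2 - a) * 2 powr a * (1 / (1 - 2 powr a / 4)) = K * (2 powr a / (1 - 2 powr a / 4)) * R powr (2 - a)"
    by (simp add: ac_simps)
  finally show ?thesis .
qed


lemma Af: fixes R b :: real assumes R: "0 < R"
  shows "(R * 2^k) powr (-b) = R powr (-b) * inverse ((2 powr b)^k)"
proof -
  have e1: "(2::real)^k = 2 powr (real k)" by (subst powr_realpow) auto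
  have "(R * 2^k) powr (-b) = R powr (-b) * (2 powr (real k)) powr (-b)"
    by (simp only: e1 powr_mult)
  also have "(2 powr (real k)) powr (-b) = 2 powr (real k * (-b))" by (rule powr_powr)
  also have "\<dots> = 2 powr (- (real k * b))" by simp
  also have "\<dots> = inverse (2 powr (real k * b))" by (rule powr_minus)
  also have "2 powr (real k * b) = (2 powr b)^k" by (rule powr_power[symmetric]) simp
  finally show ?thesis .
qed

lemma Bf: fixes R :: real assumes R: "0 < R"
  shows "(R * 2^(k+1))^2 = R powr 2 * 4 * 4^k"
proof -
  have "(R * 2^(k+1))^2 = R^2 * ((2::real)^(k+1))^2" by (simp add: power_mult_distrib)
  also have "((2::real)^(k+1))^2 = (2^2)^(k+1)" by (simp only: power_mult[symmetric] mult.commute)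
  also have "((2::real)^2)^(k+1) = 4 * 4^k" by simp
  finally show ?thesis using R by (simp add: powr_realpow)
qed

lemma ring_aux2: "(P::real) * inverse Q * (S * 4 * F) = (P*S)*4*(F/Q)"
  by (simp add: divide_inverse mult_ac)

lemma geom_ident_far:
  fixes R b :: real and k :: nat
  assumes R: "0 < R"
  shows "(R * 2^k) powr (-b) * (R * 2^(k+1))^2 = R powr (2 - b) * 4 * (4 / 2 powr b)^k"
proof -
  have "(R * 2^k) powr (-b) * (R * 2^(k+1))^2 = R powr (-b) * inverse ((2 powr b)^k) * (R powr 2 * 4 * 4^k)"
    by (simp only: Af[OF R] Bf[OF R])
  also have "\<dots> = (R powr (-b) * R powr 2) * 4 * (4^k / (2 powr b)^k)"
    by (rule ring_aux2)
  also have "R powr (-b) * R powr 2 = R powr (2 - b)"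
    by (simp add: powr_add[symmetric])
  also have "4^k / (2 powr b)^k = (4 / 2 powr b)^k"
    by (simp add: power_divide)
  finally show ?thesis .
qed

lemma dyadic_far:
  fixes D :: "'a \<Rightarrow> real" and W :: "'a \<Rightarrow> ennreal"
  assumes [measurable]: "D \<in> borel_measurable M" "W \<in> borel_measurable M"
    and Dnn: "\<And>x. 0 \<le> D x"
    and H: "\<And>\<rho>. \<rho> > 0 \<Longrightarrow> (\<integral>\<^sup>+x. W x * indicator {x\<in>space M. D x < \<rho>} x \<partial>M) \<le> ennreal (K * \<rho>^2)"
    and b: "2 < b" and R: "0 < R" and K: "0 \<le> K"
  shows "(\<integral>\<^sup>+x. W x * ennreal (if R \<le> D x then D x powr (-b) else 0) \<partial>M)
           \<le> ennreal (K * (4 / (1 - 4 / 2 powr b)) * R powr (2 - b))"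
proof -
  define c where "c k = (R * 2^k) powr (-b)" for k :: nat
  define r where "r k = R * 2^(k+1)" for k :: nat
  have c0: "0 \<le> c k" for k unfolding c_def by simp
  have q: "4 / 2 powr b < 1" 
  proof -
    have "2 powr 2 < 2 powr b" using b by (intro powr_less_mono) auto
    thus ?thesis by simp
  qed
  have q0: "0 \<le> 4 / 2 powr b" by simp
  have pw: "ennreal (if R \<le> D x then D x powr (-b) else 0)
     \<le> (\<Sum>k. ennreal (c k) * indicator {x\<in>space M. D x < r k} x)" if x: "x \<in> space M" for x
  proof (cases "R \<le> D x")
    case False
    then show ?thesis by auto
  next
    case True
    obtain n where n: "D x / R < 2^n" using real_arch_pow[of 2 "D x / R"] by auto
    have ex: "D x < R * 2^n" using n R by (simp add: field_simps)
    define n0 where "n0 = (LEAST n. D x < R * 2^n)"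
    have P: "D x < R * 2^n0" unfolding n0_def by (rule LeastI[of _ n]) (rule ex)
    have "n0 \<noteq> 0"
    proof
      assume "n0 = 0"
      with P have "D x < R" by simp
      with True show False by simp
    qed
    then obtain k where k: "n0 = Suc k" by (cases n0) auto
    have "\<not> D x < R * 2^k" using not_less_Least[of k "\<lambda>n. D x < R * 2^n"] k n0_def by auto
    hence ge: "R * 2^k \<le> D x" by simp
    have lt: "D x < r k" unfolding r_def using P k by simp
    have "D x powr (-b) \<le> c k" unfolding c_def
      using ge R b by (intro powr_mono2') auto
    hence "ennreal (if R \<le> D x then D x powr (-b) else 0) \<le> ennreal (c k) * indicator {x\<in>space M. D x < r k} x"
      using True lt x by (auto intro: ennreal_leI)
    also have "\<dots> \<le> (\<Sum>k. ennreal (c k) * indicator {x\<in>space M. D x < r k} x)"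
      using ennreal_suminf_lessD[of "\<lambda>k. ennreal (c k) * indicator {x\<in>space M. D x < r k} x"] not_le by blast
    finally show ?thesis .
  qed
  have "(\<integral>\<^sup>+x. W x * ennreal (if R \<le> D x then D x powr (-b) else 0) \<partial>M)
     \<le> (\<integral>\<^sup>+x. (\<Sum>k. W x * (ennreal (c k) * indicator {x\<in>space M. D x < r k} x)) \<partial>M)"
    by (intro nn_integral_mono) (simp add: mult_left_mono pw)
  also have "\<dots> = (\<Sum>k. \<integral>\<^sup>+x. W x * (ennreal (c k) * indicator {x\<in>space M. D x < r k} x) \<partial>M)"
    by (rule nn_integral_suminf) measurable
  also have "\<dots> = (\<Sum>k. ennreal (c k) * \<integral>\<^sup>+x. W x * indicator {x\<in>space M. D x < r k} x \<partial>M)"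
    by (subst nn_integral_cmult[symmetric]) (measurable, simp add: ac_simps)
  also have "\<dots> \<le> (\<Sum>k. ennreal (c k) * ennreal (K * (r k)^2))"
    using R by (intro suminf_le mult_left_mono H summableI) (auto simp: r_def)
  also have "\<dots> = (\<Sum>k. ennreal (K * R powr (2 - b) * 4 * (4 / 2 powr b)^k))"
  proof (rule arg_cong[where f=suminf], rule ext)
    fix k
    have "c k * (K * (r k)^2) = K * (c k * (r k)^2)" by simp
    also have "\<dots> = K * R powr (2 - b) * 4 * (4 / 2 powr b)^k"
      unfolding c_def r_def geom_ident_far[OF R] by simp
    finally have e: "c k * (K * (r k)^2) = K * R powr (2 - b) * 4 * (4 / 2 powr b)^k" .
    show "ennreal (c k) * ennreal (K * (r k)^2) = ennreal (K * R powr (2 - b) * 4 * (4 / 2 powr b)^k)"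
      unfolding e[symmetric] using c0[of k] K by (subst ennreal_mult) auto
  qed
  also have "\<dots> = ennreal (\<Sum>k. K * R powr (2 - b) * 4 * (4 / 2 powr b)^k)"
    using q q0 K by (intro suminf_ennreal2) (auto intro!: summable_mult summable_geometric)
  also have "(\<Sum>k. K * R powr (2 - b) * 4 * (4 / 2 powr b)^k) = K * R powr (2 - b) * 4 * (1 / (1 - 4 / 2 powr b))"
    using q q0 by (subst suminf_mult) (auto intro!: summable_geometric simp: suminf_geometric)
  also have "K * R powr (2 - b) * 4 * (1 / (1 - 4 / 2 powr b)) = K * (4 / (1 - 4 / 2 powr b)) * R powr (2 - b)"
    by (simp add: ac_simps)
  finally show ?thesis .
qed

lemma pa1: "0<(x::real) \<Longrightarrow> x powr (a+1) = x powr a * x"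
  by (simp add: powr_add)
lemma id1: assumes "0<x" "0<(y::real)" shows "1/(x powr a * x * y powr a) = x powr (-(a+1)) * y powr (-a)"
proof -
  have "1/(x powr a * x * y powr a) = inverse (x powr (a+1)) * inverse (y powr a)"
    using assms by (simp add: pa1 divide_inverse)
  thus ?thesis by (simp only: powr_minus)
qed
lemma id2: assumes "0<x" "0<(y::real)" shows "1/(x powr a * y * x powr a) = x powr (-(2*a)) * y powr (-1)"
proof -
  have e: "x powr (2*a) = x powr a * x powr a" by (simp add: powr_add[symmetric])
  have "1/(x powr a * y * x powr a) = inverse (x powr (2*a)) * inverse (y powr 1)"
    using assms by (simp add: e divide_inverse)
  thus ?thesis by (simp only: powr_minus)
qed
lemma id3: assumes "0<(x::real)" shows "1/(x powr a * x * x powr a) = x powr (-(2*a+1))"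
proof -
  have e: "x powr (2*a+1) = x powr a * x * x powr a" using assms by (simp add: powr_add[symmetric] pa1)
  have "1/(x powr a * x * x powr a) = inverse (x powr (2*a+1))"
    using assms by (simp only: e divide_inverse mult_1_left)
  thus ?thesis by (simp only: powr_minus)
qed
lemma id4: assumes "0<(x::real)" shows "1/((x/2) powr a * (x/2) * x powr a) = 2 powr (a+1) * x powr (-(2*a+1))"
proof -
  have e: "(x/2) powr a * (x/2) * x powr a = (x powr a * x * x powr a) / 2 powr (a+1)"
    using assms by (simp add: powr_divide pa1)
  show ?thesis unfolding e id3[OF assms, symmetric] by simp
qed


lemma frac_mono3:
  fixes p q r P Q R :: real
  assumes "0<p" "p \<le> P" "0<q" "q\<le>Q" "0<r" "r\<le>R"
  shows "1/(P*Q*R) \<le> 1/(p*q*r)"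
proof -
  have "p*q*r \<le> P*Q*R" using assms by (intro mult_mono) (auto intro: mult_mono)
  moreover have "0 < p*q*r" using assms by simp
  ultimately show ?thesis by (intro divide_left_mono) auto
qed

lemma kernel_bound:
  fixes \<xi> \<eta> :: "real^3"
  assumes xi: "\<xi> \<noteq> 0" and a: "a = 2 - eps0"
  defines "X \<equiv> norm \<xi> / 4"
  defines "A \<equiv> norm (\<eta> - 0)" and "B \<equiv> norm (\<eta> - \<xi>)" and "M \<equiv> norm (\<eta> - (1/2) *\<^sub>R \<xi>)"
  shows "kernel \<xi> \<eta> \<le> X powr (-(a+1)) * (if A < X then A powr (-a) else 0)
     + X powr (-(a+1)) * (if B < X then B powr (-a) else 0)
     + X powr (-(2*a)) * (if M < X then M powr (-1) else 0)
     + X powr (-(2*a+1)) * (if A < 8*X then A powr 0 else 0)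
     + 2 powr (a+1) * (if 8*X \<le> A then A powr (-(2*a+1)) else 0)"
    (is "_ \<le> ?T1 + ?T2 + ?T3 + ?T4 + ?T5")
proof -
  have a0: "0 < a" using a by (simp add: eps0_def)
  have X0: "0 < X" using xi by (simp add: X_def)
  have k: "kernel \<xi> \<eta> = 1/(B powr a * M * A powr a)"
    unfolding kernel_def A_def B_def M_def a by (simp add: norm_minus_commute)
  have nA: "norm \<xi> = 4*X" by (simp add: X_def)
  have t1: "4*X \<le> A + B"
    using norm_triangle_ineq4[of \<eta> "\<eta> - \<xi>"] unfolding A_def B_def nA[symmetric] by simp
  have hx: "norm ((1/2) *\<^sub>R \<xi>) = 2*X" by (simp add: X_def)
  have t2: "2*X \<le> A + M"
    using norm_triangle_ineq4[of \<eta> "\<eta> - (1/2) *\<^sub>R \<xi>"] unfolding A_def M_def hx[symmetric] by simp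
  have t3: "2*X \<le> B + M"
  proof -
    have h: "\<xi> = (1/2) *\<^sub>R \<xi> + (1/2) *\<^sub>R \<xi>" by (simp flip: scaleR_add_left)
    have "(\<eta> - (1/2) *\<^sub>R \<xi>) - (\<eta> - \<xi>) = \<xi> - (1/2) *\<^sub>R \<xi>" by simp
    also have "\<dots> = (1/2) *\<^sub>R \<xi>" using h by (metis add_diff_cancel_right')
    finally have e: "(\<eta> - (1/2) *\<^sub>R \<xi>) - (\<eta> - \<xi>) = (1/2) *\<^sub>R \<xi>" .
    have "norm ((\<eta> - (1/2) *\<^sub>R \<xi>) - (\<eta> - \<xi>)) \<le> M + B" unfolding M_def B_def by (rule norm_triangle_ineq4)
    hence "norm ((1/2) *\<^sub>R \<xi>) \<le> M + B" by (simp only: e)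
    thus ?thesis using hx by simp
  qed
  have t4: "A \<le> B + 4*X"
    using norm_triangle_ineq[of "\<eta> - \<xi>" \<xi>] unfolding A_def B_def nA[symmetric] by simp
  have t5: "A \<le> M + 2*X"
    using norm_triangle_ineq[of "\<eta> - (1/2) *\<^sub>R \<xi>" "(1/2) *\<^sub>R \<xi>"] unfolding A_def M_def hx[symmetric] by simp
  have n1: "0 \<le> ?T1" "0 \<le> ?T2" "0 \<le> ?T3" "0 \<le> ?T4" "0 \<le> ?T5" by auto
  have A0: "0 \<le> A" "0 \<le> B" "0 \<le> M" by (auto simp: A_def B_def M_def)
  show ?thesis
  proof (cases "A = 0 \<or> B = 0 \<or> M = 0")
    case True
    hence "kernel \<xi> \<eta> = 0" unfolding k by auto
    thus ?thesis using n1 by linarith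
  next
    case False
    hence p: "0 < A" "0 < B" "0 < M" using A0 by auto
    show ?thesis
    proof (cases "A < X")
      case True
      have "kernel \<xi> \<eta> \<le> 1/(X powr a * X * A powr a)"
        unfolding k using True t1 t2 X0 p a0
        by (intro frac_mono3 powr_mono2) auto
      also have "\<dots> = X powr (-(a+1)) * A powr (-a)" by (rule id1[OF X0 p(1)])
      also have "\<dots> = ?T1" using True by simp
      finally show ?thesis using n1 by linarith
    next
      case nA: False
      show ?thesis
      proof (cases "B < X")
        case True
        have "kernel \<xi> \<eta> = 1/(X powr a * X * B powr a)" if "False" using that by simp
        have "kernel \<xi> \<eta> \<le> 1/(B powr a * X * X powr a)"
          unfolding k using True t1 t3 X0 p a0 nA
          by (intro frac_mono3 powr_mono2) auto
        also have "\<dots> = 1/(X powr a * X * B powr a)" by (simp add: mult_ac)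
        also have "\<dots> = X powr (-(a+1)) * B powr (-a)" by (rule id1[OF X0 p(2)])
        also have "\<dots> = ?T2" using True by simp
        finally show ?thesis using n1 by linarith
      next
        case nB: False
        show ?thesis
        proof (cases "M < X")
          case True
          have "kernel \<xi> \<eta> \<le> 1/(X powr a * M * X powr a)"
            unfolding k using True t1 t3 X0 p a0 nA nB
            by (intro frac_mono3 powr_mono2) auto
          also have "\<dots> = X powr (-(2*a)) * M powr (-1)" by (rule id2[OF X0 p(3)])
          also have "\<dots> = ?T3" using True by simp
          finally show ?thesis using n1 by linarith
        next
          case nM: False
          show ?thesis
          proof (cases "A < 8*X")
            case True
            have "kernel \<xi> \<eta> \<le> 1/(X powr a * X * X powr a)"
              unfolding k using X0 p a0 nA nB nM
              by (intro frac_mono3 powr_mono2) auto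
            also have "\<dots> = X powr (-(2*a+1))" by (rule id3[OF X0])
            also have "\<dots> = ?T4" using True p by simp
            finally show ?thesis using n1 by linarith
          next
            case False
            have "kernel \<xi> \<eta> \<le> 1/((A/2) powr a * (A/2) * A powr a)"
              unfolding k using X0 p a0 False t4 t5
              by (intro frac_mono3 powr_mono2) auto
            also have "\<dots> = 2 powr (a+1) * A powr (-(2*a+1))" by (rule id4[OF p(1)])
            also have "\<dots> = ?T5" using False by simp
            finally show ?thesis using n1 by linarith
          qed
        qed
      qed
    qed
  qed
qed


lemma int_add_le:
  fixes f g :: "'b \<Rightarrow> real"
  assumes [measurable]: "f \<in> borel_measurable M" "g \<in> borel_measurable M" "W \<in> borel_measurable M"
    and "\<And>x. 0 \<le> f x" "\<And>x. 0 \<le> g x" "0 \<le> a" "0 \<le> b"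
    and fa: "(\<integral>\<^sup>+x. W x * ennreal (f x) \<partial>M) \<le> ennreal a"
    and gb: "(\<integral>\<^sup>+x. W x * ennreal (g x) \<partial>M) \<le> ennreal b"
  shows "(\<integral>\<^sup>+x. W x * ennreal (f x + g x) \<partial>M) \<le> ennreal (a + b)"
proof -
  have "(\<integral>\<^sup>+x. W x * ennreal (f x + g x) \<partial>M) = (\<integral>\<^sup>+x. W x * ennreal (f x) + W x * ennreal (g x) \<partial>M)"
    using assms(4,5) by (intro nn_integral_cong) (simp add: ennreal_plus distrib_left)
  also have "\<dots> = (\<integral>\<^sup>+x. W x * ennreal (f x) \<partial>M) + (\<integral>\<^sup>+x. W x * ennreal (g x) \<partial>M)"
    by (rule nn_integral_add) measurable
  also have "\<dots> \<le> ennreal a + ennreal b" using fa gb by (rule add_mono)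
  also have "\<dots> = ennreal (a + b)" using assms(6,7) by (simp add: ennreal_plus)
  finally show ?thesis .
qed

lemma int_cmult_le:
  fixes f :: "'b \<Rightarrow> real"
  assumes [measurable]: "f \<in> borel_measurable M" "W \<in> borel_measurable M"
    and "\<And>x. 0 \<le> f x" "0 \<le> c"
    and fa: "(\<integral>\<^sup>+x. W x * ennreal (f x) \<partial>M) \<le> ennreal b"
  shows "(\<integral>\<^sup>+x. W x * ennreal (c * f x) \<partial>M) \<le> ennreal (c * b)"
proof -
  have "(\<integral>\<^sup>+x. W x * ennreal (c * f x) \<partial>M) = (\<integral>\<^sup>+x. ennreal c * (W x * ennreal (f x)) \<partial>M)"
    using assms(3,4) by (intro nn_integral_cong) (simp add: ennreal_mult mult_ac)
  also have "\<dots> = ennreal c * (\<integral>\<^sup>+x. W x * ennreal (f x) \<partial>M)"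
    by (rule nn_integral_cmult) measurable
  also have "\<dots> \<le> ennreal c * ennreal b" using fa by (rule mult_left_mono) simp
  also have "\<dots> \<le> ennreal (c * b)" using assms(4) by (cases "0 \<le> b") (simp_all add: ennreal_mult ennreal_neg)
  finally show ?thesis .
qed

definition cst_near :: "real \<Rightarrow> real" where "cst_near a = 2 powr a / (1 - 2 powr a / 4)"
definition cst_far :: "real \<Rightarrow> real" where "cst_far b = 4 / (1 - 4 / 2 powr b)"

lemma cst_near_pos: "0 \<le> a \<Longrightarrow> a < 2 \<Longrightarrow> 0 \<le> cst_near a"
proof -
  assume "0 \<le> a" "a < 2"
  hence "2 powr a < 2 powr 2" by (intro powr_less_mono) auto
  thus ?thesis unfolding cst_near_def by simp
qed

lemma cst_far_pos: "2 < b \<Longrightarrow> 0 \<le> cst_far b"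
proof -
  assume "2 < b"
  hence "2 powr 2 < 2 powr b" by (intro powr_less_mono) auto
  thus ?thesis unfolding cst_far_def by simp
qed

lemma main_generic:
  fixes \<eta> :: "'b \<Rightarrow> real^3" and W :: "'b \<Rightarrow> ennreal"
  assumes [measurable]: "\<eta> \<in> borel_measurable M" "W \<in> borel_measurable M"
    and H: "\<And>p \<rho>. \<rho> > 0 \<Longrightarrow> (\<integral>\<^sup>+x. W x * indicator {x\<in>space M. norm (\<eta> x - p) < \<rho>} x \<partial>M) \<le> ennreal (K * \<rho>^2)"
    and K: "0 \<le> K" and xi: "\<xi> \<noteq> 0"
  defines "a \<equiv> 2 - eps0"
  shows "(\<integral>\<^sup>+x. W x * ennreal (kernel \<xi> (\<eta> x)) \<partial>M)
    \<le> ennreal (K * ((2 * cst_near a + cst_near 1 + 64 * cst_near 0 + 2 powr (a+1) * cst_far (2*a+1) * 8 powr (1 - 2*a)) * 4 powr (2*a - 1)) / norm \<xi> powr (3 - 2 * eps0))"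
proof -
  define X where "X = norm \<xi> / 4"
  have X0: "0 < X" using xi by (simp add: X_def)
  have a0: "0 \<le> a" "a < 2" "2 < 2*a+1" by (auto simp: a_def eps0_def)
  define D where "D p x = norm (\<eta> x - p)" for p x
  have [measurable]: "D p \<in> borel_measurable M" for p unfolding D_def by measurable
  have Dn: "0 \<le> D p x" for p x unfolding D_def by simp
  have Hp: "\<And>\<rho>. \<rho> > 0 \<Longrightarrow> (\<integral>\<^sup>+x. W x * indicator {x\<in>space M. D p x < \<rho>} x \<partial>M) \<le> ennreal (K * \<rho>^2)" for p
    unfolding D_def by (rule H)
  define f1 where "f1 p R b x = (if D p x < R then D p x powr (-b) else 0)" for p R b x
  define f5 where "f5 x = (if 8*X \<le> D 0 x then D 0 x powr (-(2*a+1)) else 0)" for x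
  have [measurable]: "f1 p R b \<in> borel_measurable M" for p R b unfolding f1_def by measurable
  have [measurable]: "f5 \<in> borel_measurable M" unfolding f5_def by measurable
  have f1n: "0 \<le> f1 p R b x" for p R b x unfolding f1_def by simp
  have f5n: "0 \<le> f5 x" for x unfolding f5_def by simp
  have near: "(\<integral>\<^sup>+x. W x * ennreal (f1 p R b x) \<partial>M) \<le> ennreal (K * cst_near b * R powr (2 - b))"
    if "0 \<le> b" "b < 2" "0 < R" for p R b
    unfolding f1_def cst_near_def using dyadic_near[OF _ _ Dn Hp that K] by (simp add: mult.assoc)
  have Dn0: "\<And>x. 0 \<le> D 0 x" by (rule Dn)
  have Hp0: "\<And>\<rho>. \<rho> > 0 \<Longrightarrow> (\<integral>\<^sup>+x. W x * indicator {x\<in>space M. D 0 x < \<rho>} x \<partial>M) \<le> ennreal (K * \<rho>^2)"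
    by (rule Hp)
  have far: "(\<integral>\<^sup>+x. W x * ennreal (f5 x) \<partial>M) \<le> ennreal (K * cst_far (2*a+1) * (8*X) powr (2 - (2*a+1)))"
    unfolding f5_def cst_far_def using dyadic_far[OF _ _ Dn0 Hp0 a0(3) _ K, where R="8*X"] X0 by (simp add: mult.assoc)
  have pw: "kernel \<xi> (\<eta> x) \<le> X powr (-(a+1)) * f1 0 X a x + X powr (-(a+1)) * f1 \<xi> X a x
     + X powr (-(2*a)) * f1 ((1/2) *\<^sub>R \<xi>) X 1 x + X powr (-(2*a+1)) * f1 0 (8*X) 0 x + 2 powr (a+1) * f5 x" for x
    using kernel_bound[OF xi a_def[THEN meta_eq_to_obj_eq], of "\<eta> x"] unfolding f1_def f5_def D_def X_def minus_zero .
  have cn: "0 \<le> cst_near a" "0 \<le> cst_near 1" "0 \<le> cst_near 0" "0 \<le> cst_far (2*a+1)"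
    using a0 by (auto intro!: cst_near_pos cst_far_pos)
  have "(\<integral>\<^sup>+x. W x * ennreal (kernel \<xi> (\<eta> x)) \<partial>M)
     \<le> (\<integral>\<^sup>+x. W x * ennreal (X powr (-(a+1)) * f1 0 X a x + X powr (-(a+1)) * f1 \<xi> X a x
     + X powr (-(2*a)) * f1 ((1/2) *\<^sub>R \<xi>) X 1 x + X powr (-(2*a+1)) * f1 0 (8*X) 0 x + 2 powr (a+1) * f5 x) \<partial>M)"
    by (intro nn_integral_mono mult_left_mono ennreal_leI pw) simp
  also have "\<dots> \<le> ennreal (X powr (-(a+1)) * (K * cst_near a * X powr (2 - a)) + X powr (-(a+1)) * (K * cst_near a * X powr (2 - a))
     + X powr (-(2*a)) * (K * cst_near 1 * X powr (2 - 1)) + X powr (-(2*a+1)) * (K * cst_near 0 * (8*X) powr (2 - 0))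
     + 2 powr (a+1) * (K * cst_far (2*a+1) * (8*X) powr (2 - (2*a+1))))"
    using a0 X0 K cn
    by (intro int_add_le int_cmult_le near far f1n f5n mult_nonneg_nonneg add_nonneg_nonneg; (measurable)?; simp)
  also have "X powr (-(a+1)) * (K * cst_near a * X powr (2 - a)) + X powr (-(a+1)) * (K * cst_near a * X powr (2 - a))
     + X powr (-(2*a)) * (K * cst_near 1 * X powr (2 - 1)) + X powr (-(2*a+1)) * (K * cst_near 0 * (8*X) powr (2 - 0))
     + 2 powr (a+1) * (K * cst_far (2*a+1) * (8*X) powr (2 - (2*a+1)))
     = K * (2 * cst_near a + cst_near 1 + 64 * cst_near 0 + 2 powr (a+1) * cst_far (2*a+1) * 8 powr (1 - 2*a)) * X powr (1 - 2*a)"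
  proof -
    have e1: "X powr (-(a+1)) * X powr (2 - a) = X powr (1 - 2*a)" by (simp add: powr_add[symmetric])
    have e2: "X powr (-(2*a)) * X powr (2 - 1) = X powr (1 - 2*a)"
    proof -
      have "X powr (-(2*a)) * X powr (2 - 1) = X powr (-(2*a) + (2 - 1))" by (rule powr_add[symmetric])
      thus ?thesis by simp
    qed
    have e3: "X powr (-(2*a+1)) * (8*X) powr (2 - 0) = 64 * X powr (1 - 2*a)"
    proof -
      have "(8*X) powr (2 - 0) = 8 powr 2 * X powr 2" by (simp only: diff_zero powr_mult)
      moreover have "(8::real) powr 2 = 64" by (simp add: powr_numeral)
      moreover have "X powr (-(2*a+1)) * X powr 2 = X powr (-(2*a+1) + 2)" by (rule powr_add[symmetric])
      ultimately show ?thesis by (simp add: mult_ac)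
    qed
    have e4: "(8*X) powr (2 - (2*a+1)) = 8 powr (1 - 2*a) * X powr (1 - 2*a)"
      using X0 by (simp add: powr_mult)
    define Y where "Y = X powr (1 - 2*a)"
    have s1: "X powr (-(a+1)) * (K * cst_near a * X powr (2 - a)) = K * cst_near a * Y"
      unfolding Y_def e1[symmetric] by (simp only: mult_ac)
    have s2: "X powr (-(2*a)) * (K * cst_near 1 * X powr (2 - 1)) = K * cst_near 1 * Y"
      unfolding Y_def e2[symmetric] by (simp only: mult_ac)
    have s3: "X powr (-(2*a+1)) * (K * cst_near 0 * (8*X) powr (2 - 0)) = K * cst_near 0 * (64 * Y)"
      unfolding Y_def e3[symmetric] by (simp only: mult_ac)
    have s5: "2 powr (a+1) * (K * cst_far (2*a+1) * (8*X) powr (2 - (2*a+1))) = K * (2 powr (a+1) * cst_far (2*a+1) * 8 powr (1 - 2*a)) * Y"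
      unfolding Y_def e4 by (simp only: mult_ac)
    show ?thesis
      unfolding s1 s2 s3 s5 Y_def[symmetric] by (simp add: algebra_simps)
  qed
  also have "X powr (1 - 2*a) = 4 powr (2*a - 1) / norm \<xi> powr (3 - 2 * eps0)"
  proof -
    have "X powr (1 - 2*a) = norm \<xi> powr (1 - 2*a) / 4 powr (1 - 2*a)"
      unfolding X_def by (simp add: powr_divide)
    also have "\<dots> = 4 powr (2*a - 1) / norm \<xi> powr (2*a - 1)"
    proof -
      have m: "z powr (1 - 2*a) = inverse (z powr (2*a - 1))" for z :: real
      proof -
        have "1 - 2*a = -(2*a - 1)" by simp
        thus ?thesis by (simp only: powr_minus)
      qed
      show ?thesis unfolding m by (simp add: divide_inverse mult.commute)
    qed
    finally show ?thesis by (simp add: a_def)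
  qed
  finally show ?thesis by (simp add: mult.assoc)
qed


lemma sin_lip: fixes w z :: real shows "\<bar>sin w - sin z\<bar> \<le> \<bar>w - z\<bar>"
proof -
  have "\<bar>sin w - sin z\<bar> = 2 * \<bar>sin ((w - z) / 2)\<bar> * \<bar>cos ((w + z) / 2)\<bar>"
    by (simp add: sin_diff_sin abs_mult)
  also have "\<dots> \<le> 2 * \<bar>(w - z) / 2\<bar> * 1"
    by (intro mult_mono abs_sin_x_le_abs_x) auto
  finally show ?thesis by simp
qed

lemma sin_lower: fixes x :: real assumes "0 \<le> x" "x \<le> 2" shows "x / 3 \<le> sin x"
proof -
  have b: "\<bar>sin x - (\<Sum>m<3. sin_coeff m * x ^ m)\<bar> \<le> inverse (fact 3) * \<bar>x\<bar> ^ 3"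
    by (rule Maclaurin_sin_bound)
  have s: "(\<Sum>m<3. sin_coeff m * x ^ m) = x"
    by (simp add: sin_coeff_def numeral_3_eq_3 lessThan_Suc)
  have f: "(fact 3 :: real) = 6" by (simp add: numeral_3_eq_3)
  have ax: "\<bar>x\<bar> ^ 3 = x^3" using assms by simp
  have e: "inverse 6 * x^3 = x^3 / 6" by simp
  have "\<bar>sin x - x\<bar> \<le> x^3 / 6" using b unfolding s f ax e .
  hence l: "x - x^3 / 6 \<le> sin x" using abs_ge_minus_self[of "sin x - x"] by linarith
  have "x^3 \<le> 4 * x"
  proof -
    have "x^2 \<le> 2^2" using assms by (intro power_mono) auto
    hence "x * x^2 \<le> x * 4" using assms by (intro mult_left_mono) auto
    thus ?thesis by (simp add: power3_eq_cube power2_eq_square mult_ac)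
  qed
  with l show ?thesis by linarith
qed

lemma J: fixes t :: real assumes "\<bar>t\<bar> \<le> pi" shows "t^2 \<le> 18 * (1 - cos t)"
proof -
  have c: "cos t = 1 - 2 * (sin (t/2))^2" using cos_double_sin[of "t/2"] by simp
  have h: "\<bar>t\<bar> / 6 \<le> \<bar>sin (t/2)\<bar>"
  proof (cases "0 \<le> t")
    case True
    have "(t/2)/3 \<le> sin (t/2)" using True assms pi_less_4 by (intro sin_lower) auto
    moreover have "\<bar>t\<bar> = t" using True by simp
    moreover have "sin (t/2) \<le> \<bar>sin (t/2)\<bar>" by simp
    ultimately show ?thesis by linarith
  next
    case False
    have "(-t/2)/3 \<le> sin (-t/2)" using False assms pi_less_4 by (intro sin_lower) auto
    moreover have "sin (-t/2) = - sin (t/2)" by (metis minus_divide_left sin_minus)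
    moreover have "\<bar>t\<bar> = -t" using False by simp
    moreover have "- sin (t/2) \<le> \<bar>sin (t/2)\<bar>" by simp
    ultimately show ?thesis by linarith
  qed
  have "(\<bar>t\<bar> / 6)^2 \<le> \<bar>sin (t/2)\<bar>^2" using h by (intro power_mono) auto
  moreover have "(\<bar>t\<bar> / 6)^2 = t^2 / 36" by (simp add: power_divide)
  moreover have "\<bar>sin (t/2)\<bar>^2 = (sin (t/2))^2" by simp
  ultimately have "t^2 / 36 \<le> (sin (t/2))^2" by simp
  moreover have "18 * (1 - (1 - 2 * (sin (t/2))^2)) = 36 * (sin (t/2))^2" by simp
  ultimately show ?thesis unfolding c by linarith
qed

lemma sph_norm: "norm (sph th ph) = 1"
proof -
  have "norm (sph th ph)^2 = (sin th * cos ph)^2 + (sin th * sin ph)^2 + (cos th)^2"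
    unfolding power2_norm_eq_inner inner_vec_def sph_def by (simp add: sum_3 power2_eq_square)
  also have "\<dots> = (sin th)^2 * ((cos ph)^2 + (sin ph)^2) + (cos th)^2" by (simp only: power_mult_distrib distrib_left)
  also have "\<dots> = (sin th)^2 + (cos th)^2" by (simp only: sin_cos_squared_add2 mult_1_right)
  also have "\<dots> = 1" by simp
  finally have "norm (sph th ph)^2 = 1" .
  thus ?thesis using norm_ge_zero[of "sph th ph"] by (auto simp: power2_eq_1_iff)
qed

lemma sph_dist: "(norm (sph th ph - sph th0 ph0))^2 = (2 - 2 * cos (th - th0)) + 2 * sin th * sin th0 * (1 - cos (ph - ph0))"
proof -
  have "(norm (sph th ph - sph th0 ph0))^2 = (norm (sph th ph))^2 + (norm (sph th0 ph0))^2 - 2 * (sph th ph \<bullet> sph th0 ph0)"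
    by (simp add: power2_norm_eq_inner inner_diff_left inner_diff_right inner_commute)
  also have "sph th ph \<bullet> sph th0 ph0 = sin th * cos ph * (sin th0 * cos ph0) + sin th * sin ph * (sin th0 * sin ph0) + cos th * cos th0"
    unfolding inner_vec_def sph_def by (simp add: sum_3)
  finally have h: "(norm (sph th ph - sph th0 ph0))^2 = 1 + 1 - 2 * (sin th * cos ph * (sin th0 * cos ph0) + sin th * sin ph * (sin th0 * sin ph0) + cos th * cos th0)"
    by (simp only: sph_norm power_one)
  show ?thesis unfolding h cos_diff by algebra
qed

lemma sph_axis: "sph th ph = (sin th * cos ph) *\<^sub>R axis 1 1 + (sin th * sin ph) *\<^sub>R axis 2 1 + cos th *\<^sub>R axis 3 1"
  unfolding sph_def by (simp add: vec_eq_iff forall_3 axis_def)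

lemma sph_meas[measurable]: "(\<lambda>p. sph (f p) (g p)) \<in> borel_measurable M" if [measurable]: "f \<in> borel_measurable M" "g \<in> borel_measurable M"
  unfolding sph_axis by measurable



lemma sph_repr: fixes e :: "real^3" assumes "norm e = 1"
  obtains th0 ph0 where "0 \<le> th0" "th0 \<le> pi" "0 \<le> ph0" "ph0 \<le> 2*pi" "e = sph th0 ph0"
proof -
  have n: "(e$1)^2 + (e$2)^2 + (e$3)^2 = 1"
  proof -
    have "norm e ^2 = (e$1)^2 + (e$2)^2 + (e$3)^2"
      unfolding power2_norm_eq_inner inner_vec_def by (simp add: sum_3 power2_eq_square)
    thus ?thesis using assms by simp
  qed
  have e3: "-1 \<le> e$3" "e$3 \<le> 1"
  proof -
    have "(e$3)^2 \<le> 1" using n by (smt (verit) zero_le_power2)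
    hence "\<bar>e$3\<bar> \<le> 1" using abs_square_le_1[of "e$3"] by simp
    thus "-1 \<le> e$3" "e$3 \<le> 1" by auto
  qed
  define th0 where "th0 = arccos (e$3)"
  have th: "0 \<le> th0" "th0 \<le> pi" "cos th0 = e$3" using arccos_bounded e3 unfolding th0_def by auto
  have s0: "0 \<le> sin th0" using th by (simp add: sin_ge_zero)
  have ss: "(sin th0)^2 = (e$1)^2 + (e$2)^2" using n th(3) sin_squared_eq[of th0] by simp
  show ?thesis
  proof (cases "sin th0 = 0")
    case True
    hence "(e$1)^2 + (e$2)^2 = 0" using ss by simp
    hence "e$1 = 0" "e$2 = 0" by (simp_all add: sum_power2_eq_zero_iff)
    hence "e = sph th0 0" using th True unfolding sph_def by (simp add: vec_eq_iff forall_3)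
    thus ?thesis using th by (intro that[of th0 0]) auto
  next
    case False
    hence sp: "0 < sin th0" using s0 by simp
    have S: "(e$1)^2 + (e$2)^2 \<noteq> 0" using ss sp by (metis power_not_zero less_irrefl)
    have "(e$1 / sin th0)^2 + (e$2 / sin th0)^2 = 1" using ss S by (simp add: power_divide flip: add_divide_distrib)
    then obtain t where t: "0 \<le> t" "t \<le> 2*pi" "e$1 / sin th0 = cos t" "e$2 / sin th0 = sin t"
      using sincos_total_2pi_le by blast
    have c1: "sin th0 * cos t = e$1" using sp by (simp add: t(3)[symmetric])
    have c2: "sin th0 * sin t = e$2" using sp by (simp add: t(4)[symmetric])
    have "e = sph th0 t" unfolding sph_def by (simp add: vec_eq_iff forall_3 c1 c2 th(3))
    thus ?thesis using th t by (intro that[of th0 t]) auto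
  qed
qed


lemma lin1: "(a::real) \<le> 18*(1-c) \<Longrightarrow> 0 \<le> q \<Longrightarrow> a/9 \<le> (2 - 2*c) + q" by (simp add: field_simps)
lemma lin2: "0 \<le> (p::real) \<Longrightarrow> q \<le> p + q" by linarith

lemma sph_dist_lower1:
  assumes "0 \<le> th" "th \<le> pi" "0 \<le> th0" "th0 \<le> pi"
  shows "(th - th0)^2 / 9 \<le> (norm (sph th ph - sph th0 ph0))^2"
proof -
  have "(th - th0)^2 \<le> 18 * (1 - cos (th - th0))" using assms by (intro J) auto
  moreover have "0 \<le> 2 * sin th * sin th0 * (1 - cos (ph - ph0))"
    using assms by (intro mult_nonneg_nonneg) (auto intro: sin_ge_zero)
  ultimately show ?thesis unfolding sph_dist by (rule lin1)
qed

lemma sph_dist_lower2: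
  assumes "0 \<le> th" "th \<le> pi" "0 \<le> th0" "th0 \<le> pi"
  shows "2 * sin th * sin th0 * (1 - cos (ph - ph0)) \<le> (norm (sph th ph - sph th0 ph0))^2"
proof -
  have "0 \<le> 2 - 2 * cos (th - th0)" by simp
  thus ?thesis unfolding sph_dist by (rule lin2)
qed

lemma phi_cases:
  fixes y w :: real
  assumes "\<bar>y\<bar> \<le> 2*pi" "18 * (1 - cos y) < w^2" "0 < w"
  shows "y \<in> {-w<..<w} \<union> {2*pi-w<..<2*pi+w} \<union> {-2*pi-w<..<-2*pi+w}"
proof -
  have sq: "\<bar>z\<bar> < w" if "\<bar>z\<bar> \<le> pi" "cos z = cos y" for z
  proof -
    have "z^2 \<le> 18 * (1 - cos z)" using that(1) by (rule J)
    also have "18 * (1 - cos z) = 18 * (1 - cos y)" using that(2) by simp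
    also have "\<dots> < w^2" by (rule assms(2))
    finally have "\<bar>z\<bar>^2 < w^2" by simp
    thus ?thesis using assms(3) by (rule power2_less_imp_less[OF _ less_imp_le])
  qed
  show ?thesis
  proof (cases "\<bar>y\<bar> \<le> pi")
    case True
    have "\<bar>y\<bar> < w" using sq[OF True] by simp
    thus ?thesis by (auto simp: abs_less_iff)
  next
    case False
    show ?thesis
    proof (cases "y > 0")
      case True
      have c: "cos (y - 2*pi) = cos y" by (simp add: cos_diff)
      have "\<bar>y - 2*pi\<bar> \<le> pi" using False True assms(1) by (simp add: abs_le_iff)
      hence "\<bar>y - 2*pi\<bar> < w" using sq c by blast
      thus ?thesis by (auto simp: abs_less_iff)
    next
      case nT: False
      have c: "cos (y + 2*pi) = cos y" by (simp add: cos_add)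
      have "\<bar>y + 2*pi\<bar> \<le> pi" using False nT assms(1) by (simp add: abs_le_iff)
      hence "\<bar>y + 2*pi\<bar> < w" using sq c by blast
      thus ?thesis by (auto simp: abs_less_iff)
    qed
  qed
qed


lemma inner_bound:
  assumes th: "0 \<le> th" "th \<le> pi" and th0: "0 \<le> th0" "th0 \<le> pi" and ph0: "0 \<le> ph0" "ph0 \<le> 2*pi"
    and d: "0 < \<delta>"
  shows "ennreal (sin th) * (\<integral>\<^sup>+ph. indicator {0..2*pi} ph * (if norm (sph th ph - sph th0 ph0) < \<delta> then 1 else 0) \<partial>lborel)
         \<le> ennreal ((12*pi+36)*\<delta>) * indicator {th0 - 3*\<delta>..th0 + 3*\<delta>} th"
proof -
  define I where "I = (\<integral>\<^sup>+ph. indicator {0..2*pi} ph * (if norm (sph th ph - sph th0 ph0) < \<delta> then 1 else 0) \<partial>lborel)"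
  have s: "0 \<le> sin th" "0 \<le> sin th0" using th th0 by (auto intro: sin_ge_zero)
  have I2: "I \<le> ennreal (2*pi)"
  proof -
    have "I \<le> (\<integral>\<^sup>+ph. indicator {0..2*pi} ph \<partial>lborel)"
      unfolding I_def by (intro nn_integral_mono) (auto split: split_indicator)
    also have "\<dots> = ennreal (2*pi)" by simp
    finally show ?thesis .
  qed
  show ?thesis
  proof (cases "\<bar>th - th0\<bar> < 3*\<delta>")
    case False
    have z: "(if norm (sph th ph - sph th0 ph0) < \<delta> then 1 else 0) = (0::ennreal)" for ph
    proof -
      have "(th - th0)^2/9 \<le> (norm (sph th ph - sph th0 ph0))^2"
        by (rule sph_dist_lower1) (use th th0 in auto)
      moreover have "(3*\<delta>)^2 \<le> \<bar>th - th0\<bar>^2" using False d by (intro power_mono) auto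
      hence "\<delta>^2 \<le> (th - th0)^2/9" by (simp add: power_mult_distrib)
      ultimately have "\<delta>^2 \<le> (norm (sph th ph - sph th0 ph0))^2" by linarith
      hence "\<delta> \<le> norm (sph th ph - sph th0 ph0)" by (rule power2_le_imp_le) simp
      thus ?thesis by simp
    qed
    have "I = 0" unfolding I_def z by simp
    thus ?thesis unfolding I_def[symmetric] by simp
  next
    case True
    have ind: "indicator {th0 - 3*\<delta>..th0 + 3*\<delta>} th = (1::ennreal)" using True by (auto simp: indicator_def)
    have sl: "sin th \<le> sin th0 + \<bar>th - th0\<bar>" using sin_lip[of th th0] by linarith
    have "ennreal (sin th) * I \<le> ennreal ((12*pi+36)*\<delta>)"
    proof (cases "sin th0 < 3*\<delta>")
      case True
      have st: "sin th \<le> 6*\<delta>" using True sl \<open>\<bar>th - th0\<bar> < 3*\<delta>\<close> by linarith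
      have "ennreal (sin th) * I \<le> ennreal (sin th) * ennreal (2*pi)" using I2 by (rule mult_left_mono) simp
      also have "\<dots> = ennreal (sin th * (2*pi))" using s by (simp add: ennreal_mult)
      also have "\<dots> \<le> ennreal ((12*pi+36)*\<delta>)"
      proof (rule ennreal_leI)
        have "sin th * (2*pi) \<le> (6*\<delta>) * (2*pi)" using st by (intro mult_right_mono) auto
        also have "\<dots> \<le> (12*pi+36)*\<delta>" using d by (simp add: algebra_simps)
        finally show "sin th * (2*pi) \<le> (12*pi+36)*\<delta>" .
      qed
      finally show ?thesis .
    next
      case False
      show ?thesis
      proof (cases "sin th = 0")
        case True then show ?thesis by simp
      next
        case False2: False
        have sp: "0 < sin th" using s False2 by simp
        have sp0: "0 < sin th0" using False d by linarith
        define S where "S = sin th * sin th0"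
        have S0: "0 < S" using sp sp0 by (simp add: S_def)
        define w where "w = 3*\<delta> / sqrt S"
        have w0: "0 < w" using S0 d by (simp add: w_def)
        have w2: "w^2 = 9*\<delta>^2 / S" using S0 by (simp add: w_def power_divide power_mult_distrib)
        define U where "U = {ph0-w<..<ph0+w} \<union> {ph0+2*pi-w<..<ph0+2*pi+w} \<union> {ph0-2*pi-w<..<ph0-2*pi+w}"
        have sub: "indicator {0..2*pi} ph * (if norm (sph th ph - sph th0 ph0) < \<delta> then 1 else 0) \<le> (indicator U ph :: ennreal)" for ph
        proof (cases "ph \<in> {0..2*pi} \<and> norm (sph th ph - sph th0 ph0) < \<delta>")
          case False then show ?thesis by (auto simp: indicator_def)
        next
          case True
          have y: "\<bar>ph - ph0\<bar> \<le> 2*pi" using True ph0 by auto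
          have "2 * sin th * sin th0 * (1 - cos (ph - ph0)) \<le> (norm (sph th ph - sph th0 ph0))^2"
            by (rule sph_dist_lower2) (use th th0 in auto)
          also have "\<dots> < \<delta>^2" using True by (intro power_strict_mono) auto
          finally have lt: "2 * S * (1 - cos (ph - ph0)) < \<delta>^2" by (simp add: S_def mult_ac)
          have "18 * (1 - cos (ph - ph0)) = 9 * (2 * S * (1 - cos (ph - ph0))) / S" using S0 by simp
          also have "\<dots> < 9 * \<delta>^2 / S" using lt S0 by (intro divide_strict_right_mono) auto
          finally have "18 * (1 - cos (ph - ph0)) < w^2" unfolding w2 .
          from phi_cases[OF y this w0] have "ph \<in> U" unfolding U_def by auto
          thus ?thesis by (auto simp: indicator_def)
        qed
        have "I \<le> (\<integral>\<^sup>+ph. indicator U ph \<partial>lborel)" unfolding I_def by (intro nn_integral_mono sub)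
        also have "\<dots> = emeasure lborel U" by (simp add: U_def)
        also have "\<dots> \<le> emeasure lborel ({ph0-w<..<ph0+w} \<union> {ph0+2*pi-w<..<ph0+2*pi+w}) + emeasure lborel {ph0-2*pi-w<..<ph0-2*pi+w}"
          unfolding U_def by (rule emeasure_subadditive) auto
        also have "\<dots> \<le> (emeasure lborel {ph0-w<..<ph0+w} + emeasure lborel {ph0+2*pi-w<..<ph0+2*pi+w}) + emeasure lborel {ph0-2*pi-w<..<ph0-2*pi+w}"
          by (intro add_mono emeasure_subadditive) auto
        also have "\<dots> = ennreal (2*w) + ennreal (2*w) + ennreal (2*w)"
          using w0 by (simp add: emeasure_lborel_Ioo)
        also have "\<dots> = ennreal (6*w)" using w0 by (simp flip: ennreal_plus)
        finally have I6: "I \<le> ennreal (6*w)" .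
        have "ennreal (sin th) * I \<le> ennreal (sin th) * ennreal (6*w)" using I6 by (rule mult_left_mono) simp
        also have "\<dots> = ennreal (sin th * (6*w))" using sp w0 by (simp add: ennreal_mult)
        also have "\<dots> \<le> ennreal ((12*pi+36)*\<delta>)"
        proof (rule ennreal_leI)
          have "sin th \<le> 2 * sin th0" using sl True False by linarith
          hence "sin th * sin th \<le> sin th * (2 * sin th0)" using sp by (intro mult_left_mono) auto
          also have "\<dots> \<le> 4 * S" using sp sp0 unfolding S_def by simp
          finally have "(sin th)^2 \<le> 4 * S" by (simp add: power2_eq_square)
          hence "sqrt ((sin th)^2) \<le> sqrt (4 * S)" by (rule real_sqrt_le_mono)
          hence "sin th \<le> 2 * sqrt S" using sp by (simp add: real_sqrt_mult)
          hence "sin th * (6*w) \<le> 2 * sqrt S * (6*w)" using w0 by (intro mult_right_mono) auto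
          also have "\<dots> = 36 * \<delta>" using S0 by (simp add: w_def)
          also have "\<dots> \<le> (12*pi+36)*\<delta>" using d by (simp add: algebra_simps)
          finally show "sin th * (6*w) \<le> (12*pi+36)*\<delta>" .
        qed
        finally show ?thesis .
      qed
    qed
    thus ?thesis unfolding I_def[symmetric] ind by simp
  qed
qed


lemma cap_bound:
  fixes e :: "real^3" assumes e: "norm e = 1" and d: "0 < \<delta>"
  shows "(\<integral>\<^sup>+x. ennreal (sin (fst x)) * indicator ({0..pi} \<times> {0..2*pi}) x * (if norm (sph (fst x) (snd x) - e) < \<delta> then 1 else 0) \<partial>lborel)
    \<le> ennreal ((12*pi+36) * (6 * \<delta>^2))"
proof -
  obtain th0 ph0 where th0: "0 \<le> th0" "th0 \<le> pi" and ph0: "0 \<le> ph0" "ph0 \<le> 2*pi" and ee: "e = sph th0 ph0"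
    using sph_repr[OF e] by blast
  define F where "F x = ennreal (sin (fst x)) * (indicator {0..pi} (fst x) * indicator {0..2*pi} (snd x)) * (if norm (sph (fst x) (snd x) - e) < \<delta> then 1 else (0::ennreal))" for x :: "real \<times> real"
  have Fm: "F \<in> borel_measurable (lborel \<Otimes>\<^sub>M lborel)" unfolding F_def by measurable
  have "(\<integral>\<^sup>+x. F x \<partial>lborel) = (\<integral>\<^sup>+x. F x \<partial>(lborel \<Otimes>\<^sub>M lborel))" by (simp add: lborel_prod)
  also have "\<dots> = (\<integral>\<^sup>+th. (\<integral>\<^sup>+ph. F (th, ph) \<partial>lborel) \<partial>lborel)"
    using Fm by (rule lborel.nn_integral_fst[symmetric])
  also have "\<dots> \<le> (\<integral>\<^sup>+th. ennreal ((12*pi+36)*\<delta>) * indicator {th0 - 3*\<delta>..th0 + 3*\<delta>} th \<partial>lborel)"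
  proof (rule nn_integral_mono)
    fix th :: real
    have eq: "F (th, ph) = (ennreal (sin th) * indicator {0..pi} th) * (indicator {0..2*pi} ph * (if norm (sph th ph - sph th0 ph0) < \<delta> then 1 else 0))" for ph
      unfolding F_def ee by (simp add: mult_ac)
    have m: "(\<lambda>ph. indicator {0..2*pi} ph * (if norm (sph th ph - sph th0 ph0) < \<delta> then 1 else (0::ennreal))) \<in> borel_measurable lborel"
      by measurable
    have "(\<integral>\<^sup>+ph. F (th, ph) \<partial>lborel) = (ennreal (sin th) * indicator {0..pi} th) * (\<integral>\<^sup>+ph. indicator {0..2*pi} ph * (if norm (sph th ph - sph th0 ph0) < \<delta> then 1 else 0) \<partial>lborel)"
      unfolding eq by (rule nn_integral_cmult[OF m])
    also have "\<dots> \<le> ennreal ((12*pi+36)*\<delta>) * indicator {th0 - 3*\<delta>..th0 + 3*\<delta>} th"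
    proof (cases "th \<in> {0..pi}")
      case True
      have "ennreal (sin th) * (\<integral>\<^sup>+ph. indicator {0..2*pi} ph * (if norm (sph th ph - sph th0 ph0) < \<delta> then 1 else 0) \<partial>lborel)
         \<le> ennreal ((12*pi+36)*\<delta>) * indicator {th0 - 3*\<delta>..th0 + 3*\<delta>} th"
        using True by (intro inner_bound th0 ph0 d) auto
      thus ?thesis using True by simp
    next
      case False
      thus ?thesis by simp
    qed
    finally show "(\<integral>\<^sup>+ph. F (th, ph) \<partial>lborel) \<le> ennreal ((12*pi+36)*\<delta>) * indicator {th0 - 3*\<delta>..th0 + 3*\<delta>} th" .
  qed
  also have "\<dots> = ennreal ((12*pi+36)*\<delta>) * emeasure lborel {th0 - 3*\<delta>..th0 + 3*\<delta>}"
    by (rule nn_integral_cmult_indicator) simp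
  also have "\<dots> = ennreal ((12*pi+36)*\<delta>) * ennreal (6*\<delta>)"
    using d by (simp add: emeasure_lborel_Icc)
  also have "\<dots> = ennreal ((12*pi+36) * (6 * \<delta>^2))"
    using d by (simp add: ennreal_mult[symmetric] power2_eq_square mult_ac)
  finally show ?thesis unfolding F_def by (simp add: indicator_times)
qed


lemma plane_H:
  fixes a u v p :: "real^3"
  assumes on: "orthonormal_pair u v" and r: "0 < \<rho>"
  shows "(\<integral>\<^sup>+x. 1 * indicator {x\<in>space lborel. norm ((a + fst x *\<^sub>R u + snd x *\<^sub>R v) - p) < \<rho>} x \<partial>lborel) \<le> ennreal (4 * \<rho>^2)"
proof -
  have nu: "norm u = 1" and nv: "norm v = 1" and uv: "u \<bullet> v = 0" using on by (auto simp: orthonormal_pair_def)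
  have uu: "u \<bullet> u = 1" using nu by (simp add: power2_norm_eq_inner[symmetric])
  have vv: "v \<bullet> v = 1" using nv by (simp add: power2_norm_eq_inner[symmetric])
  have vu: "v \<bullet> u = 0" using uv by (simp add: inner_commute)
  define s0 where "s0 = (p - a) \<bullet> u"
  define t0 where "t0 = (p - a) \<bullet> v"
  define A where "A = {s0 - \<rho><..<s0 + \<rho>}"
  define B where "B = {t0 - \<rho><..<t0 + \<rho>}"
  have sub: "x \<in> A \<times> B" if x: "norm ((a + fst x *\<^sub>R u + snd x *\<^sub>R v) - p) < \<rho>" for x :: "real \<times> real"
  proof -
    let ?w = "(a + fst x *\<^sub>R u + snd x *\<^sub>R v) - p"
    have e1: "?w \<bullet> u = fst x - s0" unfolding s0_def
      by (simp add: inner_diff_left inner_add_left uu vu algebra_simps)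
    have e2: "?w \<bullet> v = snd x - t0" unfolding t0_def
      by (simp add: inner_diff_left inner_add_left vv uv algebra_simps)
    have "\<bar>?w \<bullet> u\<bar> \<le> norm ?w * norm u" by (rule Cauchy_Schwarz_ineq2)
    hence "\<bar>fst x - s0\<bar> < \<rho>" using x nu e1 by simp
    moreover have "\<bar>?w \<bullet> v\<bar> \<le> norm ?w * norm v" by (rule Cauchy_Schwarz_ineq2)
    hence "\<bar>snd x - t0\<bar> < \<rho>" using x nv e2 by simp
    ultimately show ?thesis unfolding A_def B_def by (cases x) (auto simp: abs_less_iff)
  qed
  have "(\<integral>\<^sup>+x. 1 * indicator {x\<in>space lborel. norm ((a + fst x *\<^sub>R u + snd x *\<^sub>R v) - p) < \<rho>} x \<partial>lborel)
      \<le> (\<integral>\<^sup>+x. indicator (A \<times> B) x \<partial>lborel)"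
    using sub by (intro nn_integral_mono) (auto split: split_indicator)
  also have "\<dots> = emeasure lborel (A \<times> B)"
  proof (rule nn_integral_indicator)
    have "A \<times> B \<in> sets borel" unfolding A_def B_def by (intro borel_open open_Times) auto
    thus "A \<times> B \<in> sets lborel" by simp
  qed
  also have "\<dots> = emeasure (lborel \<Otimes>\<^sub>M lborel) (A \<times> B)" by (simp add: lborel_prod)
  also have "\<dots> = emeasure lborel A * emeasure lborel B"
    by (rule lborel.emeasure_pair_measure_Times) (auto simp: A_def B_def)
  also have "\<dots> = ennreal (2*\<rho>) * ennreal (2*\<rho>)" using r by (simp add: A_def B_def emeasure_lborel_Ioo)
  also have "\<dots> = ennreal (4 * \<rho>^2)" using r by (simp add: ennreal_mult[symmetric] power2_eq_square mult_ac)
  finally show ?thesis .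
qed

definition Kc :: real where "Kc = (12*pi+36) * 6"

lemma cap_bound': "norm e = 1 \<Longrightarrow> 0 < \<delta> \<Longrightarrow>
  (\<integral>\<^sup>+x. ennreal (sin (fst x)) * indicator ({0..pi} \<times> {0..2*pi}) x * (if norm (sph (fst x) (snd x) - e) < \<delta> then 1 else 0) \<partial>lborel)
    \<le> ennreal (Kc * \<delta>^2)"
proof -
  assume a: "norm e = 1" "0 < \<delta>"
  have eq: "(12*pi+36) * (6 * \<delta>^2) = Kc * \<delta>^2" unfolding Kc_def by (simp add: mult_ac)
  show ?thesis using cap_bound[OF a] unfolding eq .
qed

lemma sphere_H:
  fixes c p :: "real^3"
  assumes r: "0 < r" and rho: "0 < \<rho>"
  shows "(\<integral>\<^sup>+x. (ennreal (r^2 * sin (fst x)) * indicator ({0..pi} \<times> {0..2*pi}) x) * indicator {x\<in>space lborel. norm ((c + r *\<^sub>R sph (fst x) (snd x)) - p) < \<rho>} x \<partial>lborel)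
     \<le> ennreal ((32 * pi^2 + 4 * Kc) * \<rho>^2)"
proof -
  define S where "S = {0..pi} \<times> {0..(2::real)*pi}"
  define q where "q = p - c"
  have Kc0: "0 \<le> Kc" unfolding Kc_def by (simp add: pi_gt_zero less_imp_le)
  have Ssin: "0 \<le> sin (fst x)" if "x \<in> S" for x using that by (auto simp: S_def intro: sin_ge_zero)
  have nr: "norm (c + r *\<^sub>R sph th ph - p) = norm (r *\<^sub>R sph th ph - q)" for th ph
    by (simp add: q_def algebra_simps)
  have rev: "\<bar>r - norm q\<bar> \<le> norm (c + r *\<^sub>R sph th ph - p)" for th ph
  proof -
    have "\<bar>norm (r *\<^sub>R sph th ph) - norm q\<bar> \<le> norm (r *\<^sub>R sph th ph - q)" by (rule norm_triangle_ineq3)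
    thus ?thesis using r by (simp add: nr sph_norm)
  qed
  let ?L = "(\<integral>\<^sup>+x. (ennreal (r^2 * sin (fst x)) * indicator S x) * indicator {x\<in>space lborel. norm ((c + r *\<^sub>R sph (fst x) (snd x)) - p) < \<rho>} x \<partial>lborel)"
  have "?L \<le> ennreal ((32 * pi^2 + 4 * Kc) * \<rho>^2)"
  proof (cases "\<rho> < \<bar>r - norm q\<bar>")
    case True
    have "?L \<le> (\<integral>\<^sup>+(x::real\<times>real). 0 \<partial>lborel)"
    proof (rule nn_integral_mono)
      fix x :: "real \<times> real"
      have "\<not> norm ((c + r *\<^sub>R sph (fst x) (snd x)) - p) < \<rho>" using rev[of "fst x" "snd x"] True by linarith
      thus "(ennreal (r^2 * sin (fst x)) * indicator S x) * indicator {x\<in>space lborel. norm ((c + r *\<^sub>R sph (fst x) (snd x)) - p) < \<rho>} x \<le> 0"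
        by simp
    qed
    thus ?thesis by simp
  next
    case nT: False
    show ?thesis
    proof (cases "r \<le> 4 * \<rho>")
      case True
      have "?L \<le> (\<integral>\<^sup>+x. ennreal (r^2) * indicator S x \<partial>lborel)"
      proof (intro nn_integral_mono)
        fix x :: "real \<times> real"
        have "ennreal (r^2 * sin (fst x)) * indicator S x \<le> ennreal (r^2) * indicator S x"
        proof (cases "x \<in> S")
          case True
          have "r^2 * sin (fst x) \<le> r^2 * 1" by (intro mult_left_mono) auto
          thus ?thesis using True by (auto intro: ennreal_leI)
        qed simp
        thus "(ennreal (r^2 * sin (fst x)) * indicator S x) * indicator {x\<in>space lborel. norm ((c + r *\<^sub>R sph (fst x) (snd x)) - p) < \<rho>} x \<le> ennreal (r^2) * indicator S x"
          by (auto split: split_indicator)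
      qed
      also have "\<dots> = ennreal (r^2) * emeasure lborel S"
      proof (rule nn_integral_cmult_indicator)
        have "S \<in> sets borel" unfolding S_def by (intro borel_closed closed_Times) auto
        thus "S \<in> sets lborel" by simp
      qed
      also have "emeasure lborel S = ennreal (2 * pi^2)"
      proof -
        have "emeasure lborel S = emeasure (lborel \<Otimes>\<^sub>M lborel) S" by (simp add: lborel_prod)
        also have "\<dots> = emeasure lborel {0..pi} * emeasure lborel {0..2*pi}"
          unfolding S_def by (rule lborel.emeasure_pair_measure_Times) auto
        also have "\<dots> = ennreal pi * ennreal (2*pi)" by simp
        also have "\<dots> = ennreal (2 * pi^2)" by (simp add: ennreal_mult[symmetric] power2_eq_square mult_ac)
        finally show ?thesis .
      qed
      also have "ennreal (r^2) * ennreal (2 * pi^2) = ennreal (r^2 * (2*pi^2))" by (simp add: ennreal_mult[symmetric])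
      also have "\<dots> \<le> ennreal ((32 * pi^2 + 4 * Kc) * \<rho>^2)"
      proof (rule ennreal_leI)
        have "r^2 \<le> (4*\<rho>)^2" using True r by (intro power_mono) auto
        hence "r^2 * (2*pi^2) \<le> (4*\<rho>)^2 * (2*pi^2)" by (intro mult_right_mono) auto
        also have "\<dots> = 32 * pi^2 * \<rho>^2" by (simp add: power_mult_distrib)
        also have "\<dots> \<le> (32 * pi^2 + 4 * Kc) * \<rho>^2" using Kc0 by (intro mult_right_mono) auto
        finally show "r^2 * (2*pi^2) \<le> (32 * pi^2 + 4 * Kc) * \<rho>^2" .
      qed
      finally show ?thesis .
    next
      case False
      have nq: "\<bar>norm q - r\<bar> \<le> \<rho>" using nT by linarith
      have nq0: "0 < norm q" using nq False r by linarith
      define e where "e = (1 / norm q) *\<^sub>R q"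
      have ne: "norm e = 1" using nq0 by (simp add: e_def)
      have d0: "0 < 2 * \<rho> / r" using r rho by simp
      have key: "norm (sph th ph - e) < 2 * \<rho> / r" if "norm ((c + r *\<^sub>R sph th ph) - p) < \<rho>" for th ph
      proof -
        have a1: "r *\<^sub>R sph th ph - q = r *\<^sub>R (sph th ph - (1/r) *\<^sub>R q)" using r by (simp add: algebra_simps)
        have "norm (sph th ph - (1/r) *\<^sub>R q) = norm (c + r *\<^sub>R sph th ph - p) / r"
          using r unfolding nr a1 by simp
        hence b1: "norm (sph th ph - (1/r) *\<^sub>R q) < \<rho> / r" using that r by (simp add: divide_strict_right_mono)
        have "(1/r) *\<^sub>R q - e = (1/r - 1/norm q) *\<^sub>R q" by (simp add: e_def algebra_simps)
        hence "norm ((1/r) *\<^sub>R q - e) = \<bar>1/r - 1/norm q\<bar> * norm q" by simp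
        also have "\<dots> = \<bar>norm q - r\<bar> / r" using r nq0 by (simp add: field_simps abs_divide abs_mult)
        finally have b2: "norm ((1/r) *\<^sub>R q - e) \<le> \<rho> / r" using nq r by (simp add: divide_right_mono)
        have "norm (sph th ph - e) \<le> norm (sph th ph - (1/r) *\<^sub>R q) + norm ((1/r) *\<^sub>R q - e)"
          using norm_triangle_ineq[of "sph th ph - (1/r) *\<^sub>R q" "(1/r) *\<^sub>R q - e"] by simp
        also have "\<dots> < \<rho> / r + \<rho> / r" using b1 b2 by linarith
        finally show ?thesis by simp
      qed
      have "?L \<le> (\<integral>\<^sup>+x. ennreal (r^2) * (ennreal (sin (fst x)) * indicator ({0..pi} \<times> {0..2*pi}) x * (if norm (sph (fst x) (snd x) - e) < 2 * \<rho> / r then 1 else 0)) \<partial>lborel)"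
      proof (intro nn_integral_mono)
        fix x :: "real \<times> real"
        show "(ennreal (r^2 * sin (fst x)) * indicator S x) * indicator {x\<in>space lborel. norm ((c + r *\<^sub>R sph (fst x) (snd x)) - p) < \<rho>} x
          \<le> ennreal (r^2) * (ennreal (sin (fst x)) * indicator ({0..pi} \<times> {0..2*pi}) x * (if norm (sph (fst x) (snd x) - e) < 2 * \<rho> / r then 1 else 0))"
        proof (cases "x \<in> S \<and> norm ((c + r *\<^sub>R sph (fst x) (snd x)) - p) < \<rho>")
          case True
          have "norm (sph (fst x) (snd x) - e) < 2 * \<rho> / r" using key True by blast
          thus ?thesis using True Ssin[of x] by (simp add: S_def ennreal_mult)
        next
          case False
          thus ?thesis by (auto simp: S_def split: split_indicator)
        qed
      qed
      also have "\<dots> = ennreal (r^2) * (\<integral>\<^sup>+x. ennreal (sin (fst x)) * indicator ({0..pi} \<times> {0..2*pi}) x * (if norm (sph (fst x) (snd x) - e) < 2 * \<rho> / r then 1 else 0) \<partial>lborel)"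
      proof (rule nn_integral_cmult)
        have "(\<lambda>x. ennreal (sin (fst x)) * (indicator {0..pi} (fst x) * indicator {0..2*pi} (snd x)) * (if norm (sph (fst x) (snd x) - e) < 2 * \<rho> / r then 1 else 0))
          \<in> borel_measurable (lborel \<Otimes>\<^sub>M lborel)" by measurable
        thus "(\<lambda>x. ennreal (sin (fst x)) * indicator ({0..pi} \<times> {0..2*pi}) x * (if norm (sph (fst x) (snd x) - e) < 2 * \<rho> / r then 1 else 0))
          \<in> borel_measurable lborel" by (simp add: lborel_prod indicator_times)
      qed
      also have "\<dots> \<le> ennreal (r^2) * ennreal (Kc * (2 * \<rho> / r)^2)"
        by (intro mult_left_mono cap_bound' ne d0) simp
      also have "\<dots> = ennreal (4 * Kc * \<rho>^2)"
        using r Kc0 by (simp add: ennreal_mult[symmetric] power_divide power_mult_distrib field_simps)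
      also have "\<dots> \<le> ennreal ((32 * pi^2 + 4 * Kc) * \<rho>^2)"
        by (intro ennreal_leI mult_right_mono) auto
      finally show ?thesis .
    qed
  qed
  thus ?thesis unfolding S_def .
qed


lemma kernel_nonneg: "0 \<le> kernel \<xi> \<eta>"
  unfolding kernel_def by (intro divide_nonneg_nonneg mult_nonneg_nonneg) auto

theorem lemma2p3:
  shows "\<exists>C::real. \<forall>\<xi>::real^3. \<xi> \<noteq> 0 \<longrightarrow>
           (\<forall>a u v. orthonormal_pair u v \<longrightarrow>
              plane_integral (kernel \<xi>) a u v \<le> ennreal (C / norm \<xi> powr (3 - 2 * eps0))) \<and>
           (\<forall>c r. r > 0 \<longrightarrow>
              sphere_integral (kernel \<xi>) c r \<le> ennreal (C / norm \<xi> powr (3 - 2 * eps0)))"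
proof -
  define Cst where "Cst = (2 * cst_near (2 - eps0) + cst_near 1 + 64 * cst_near 0 + 2 powr ((2 - eps0)+1) * cst_far (2*(2 - eps0)+1) * 8 powr (1 - 2*(2 - eps0))) * 4 powr (2*(2 - eps0) - 1)"
  define Km where "Km = 4 + (32 * pi^2 + 4 * Kc)"
  have Kc0: "0 \<le> Kc" unfolding Kc_def by (simp add: pi_gt_zero less_imp_le)
  have Km4: "4 \<le> Km" and Kms: "32 * pi^2 + 4 * Kc \<le> Km" and Km0: "0 \<le> Km"
    using Kc0 by (auto simp: Km_def)
  show ?thesis
  proof (intro exI[of _ "Km * Cst"] allI impI conjI)
    fix \<xi> :: "real^3" assume xi: "\<xi> \<noteq> 0"
    fix a u v :: "real^3" assume on: "orthonormal_pair u v"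
    define \<eta> where "\<eta> x = a + fst x *\<^sub>R u + snd x *\<^sub>R v" for x :: "real \<times> real"
    have [measurable]: "\<eta> \<in> borel_measurable (lborel :: (real \<times> real) measure)"
    proof -
      have "\<eta> \<in> borel_measurable (lborel \<Otimes>\<^sub>M lborel)" unfolding \<eta>_def by measurable
      thus ?thesis by (simp add: lborel_prod)
    qed
    have H: "(\<integral>\<^sup>+x. (\<lambda>_. 1) x * indicator {x\<in>space lborel. norm (\<eta> x - p) < \<rho>} x \<partial>lborel) \<le> ennreal (Km * \<rho>^2)"
      if "\<rho> > 0" for p \<rho>
    proof -
      have "(\<integral>\<^sup>+x. (\<lambda>_. 1) x * indicator {x\<in>space lborel. norm (\<eta> x - p) < \<rho>} x \<partial>lborel) \<le> ennreal (4 * \<rho>^2)"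
        unfolding \<eta>_def using plane_H[OF on that, of a p] by simp
      also have "\<dots> \<le> ennreal (Km * \<rho>^2)" using Km4 by (intro ennreal_leI mult_right_mono) auto
      finally show ?thesis .
    qed
    have "plane_integral (kernel \<xi>) a u v = (\<integral>\<^sup>+x. (\<lambda>_. 1) x * ennreal (kernel \<xi> (\<eta> x)) \<partial>lborel)"
      unfolding plane_integral_def \<eta>_def by simp
    also have "\<dots> \<le> ennreal (Km * Cst / norm \<xi> powr (3 - 2 * eps0))"
      unfolding Cst_def by (rule main_generic[OF _ _ H Km0 xi]) simp_all
    finally show "plane_integral (kernel \<xi>) a u v \<le> ennreal (Km * Cst / norm \<xi> powr (3 - 2 * eps0))" .
  next
    fix \<xi> :: "real^3" assume xi: "\<xi> \<noteq> 0"
    fix c :: "real^3" and r :: real assume r: "r > 0"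
    define S where "S = {0..pi} \<times> {0..(2::real)*pi}"
    define \<eta> where "\<eta> x = c + r *\<^sub>R sph (fst x) (snd x)" for x :: "real \<times> real"
    define W where "W x = ennreal (r^2 * sin (fst x)) * indicator S x" for x :: "real \<times> real"
    have [measurable]: "\<eta> \<in> borel_measurable (lborel :: (real \<times> real) measure)"
    proof -
      have "\<eta> \<in> borel_measurable (lborel \<Otimes>\<^sub>M lborel)" unfolding \<eta>_def by measurable
      thus ?thesis by (simp add: lborel_prod)
    qed
    have [measurable]: "W \<in> borel_measurable (lborel :: (real \<times> real) measure)"
    proof -
      have "(\<lambda>x. ennreal (r^2 * sin (fst x)) * (indicator {0..pi} (fst x) * indicator {0..2*pi} (snd x))) \<in> borel_measurable (lborel \<Otimes>\<^sub>M lborel)"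
        by measurable
      thus ?thesis unfolding W_def S_def by (simp add: lborel_prod indicator_times)
    qed
    have H: "(\<integral>\<^sup>+x. W x * indicator {x\<in>space lborel. norm (\<eta> x - p) < \<rho>} x \<partial>lborel) \<le> ennreal (Km * \<rho>^2)"
      if "\<rho> > 0" for p \<rho>
    proof -
      have "(\<integral>\<^sup>+x. W x * indicator {x\<in>space lborel. norm (\<eta> x - p) < \<rho>} x \<partial>lborel) \<le> ennreal ((32 * pi^2 + 4 * Kc) * \<rho>^2)"
        unfolding \<eta>_def W_def S_def using sphere_H[OF r that, of c p] by simp
      also have "\<dots> \<le> ennreal (Km * \<rho>^2)" using Kms by (intro ennreal_leI mult_right_mono) auto
      finally show ?thesis .
    qed
    have "sphere_integral (kernel \<xi>) c r = (\<integral>\<^sup>+x. W x * ennreal (kernel \<xi> (\<eta> x)) \<partial>lborel)"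
      unfolding sphere_integral_def
    proof (rule nn_integral_cong)
      fix x :: "real \<times> real"
      show "ennreal (kernel \<xi> (c + r *\<^sub>R sph (fst x) (snd x)) * r\<^sup>2 * sin (fst x)) * indicator ({0..pi} \<times> {0..2 * pi}) x
          = W x * ennreal (kernel \<xi> (\<eta> x))"
      proof (cases "x \<in> S")
        case True
        have "0 \<le> sin (fst x)" using True by (auto simp: S_def intro: sin_ge_zero)
        thus ?thesis using True kernel_nonneg[of \<xi> "\<eta> x"]
          by (simp add: W_def \<eta>_def S_def ennreal_mult[symmetric] mult_ac)
      next
        case False
        thus ?thesis by (simp add: W_def S_def)
      qed
    qed
    also have "\<dots> \<le> ennreal (Km * Cst / norm \<xi> powr (3 - 2 * eps0))"
      unfolding Cst_def by (rule main_generic[OF _ _ H Km0 xi]) simp_all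
    finally show "sphere_integral (kernel \<xi>) c r \<le> ennreal (Km * Cst / norm \<xi> powr (3 - 2 * eps0))" .
  qed
qed

end
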